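(* For every positive integer $n$, consider the transducer $\mathcal{T}_n$ defined below. (a) (Standard construction.) Let $\mathcal{T}'_n$ be the trimmed result of the specialized determinization of $\mathcal{T}_n$, and let $\mathcal{A}_L^{std}$ and $\mathcal{A}_R^{std}$ be the accessible subset-construction determinizations of the underlying automaton of $\mathcal{T}'_n$ and of the reversed underlying automaton of $\mathcal{T}'_n$, respectively. Then $\mathcal{A}_L^{std}$ and $\mathcal{A}_R^{std}$ together have at least $(n!+2)+(2^n+n)$ states. (b) (New construction.) Let $\mathcal{A}_L^{new}$ and $\mathcal{A}_R^{new}$ be the accessible subset-construction determinizations of the underlying automaton of $\mathcal{T}_n$ and of the reversed underlying automaton of $\mathcal{T}_n$, respectively. Then $\mathcal{A}_L^{new}$ and $\mathcal{A}_R^{new}$ together have exactly $3+(2^n+n)$ states.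
   Context: Let $\Sigma_n=\{a_1,\dots,a_n\}$ and let the output monoid be the free monoid $\{1\}^*$. $\mathcal{T}_n=\langle\Sigma_n^*\times\{1\}^*,Q,\{s\},\{f\},\Delta_n\rangle$ with $Q=\{s,q_1,\dots,q_n,f\}$, $Q_n=\{q_1,\dots,q_n\}$, and $\Delta_n=\Delta_{s,n}\cup\Delta_{Q_n}\cup\Delta_{f,n}$ where: $\Delta_{s,n}=\{\langle s,\langle a_j,1^{i-1}\rangle,q_i\rangle:1\le i,j\le n\}$; $\Delta_{Q_n}$ consists, for all $1\le i,j\le n$, of the transition $\langle q_i,\langle a_j,1^n\rangle,q_i\rangle$ if $i\notin\{1,j\}$, $\langle q_1,\langle a_j,1^{n+j-1}\rangle,q_j\rangle$ if $i=1$, and $\langle q_j,\langle a_j,1^{n-j+1}\rangle,q_1\rangle$ if $i=j\neq1$; $\Delta_{f,n}=\{\langle q_i,\langle a_j,1^{2n-i+1}\rangle,f\rangle:1\le j\le i\le n\}$. The underlying automaton of a transducer $\langle\Sigma^*\times\mathcal{M},Q,I,F,\Delta\rangle$ is the nondeterministic automaton over $\Sigma$ with states $Q$, initial states $I$, final states $F$ and transitions $\langle p,a,q\rangle$ for each $\langle p,\langle a,m\rangle,q\rangle\in\Delta$; its reversal swaps initial and final states and reverses all transitions. The accessible subset-construction determinization of an automaton with initial set $I$ has as states exactly the subsets reachable from $I$ via $\delta(P,a)=\{q:\exists p\in P,\ \langle p,a,q\rangle\}$. Specialized determinization: for a transducer with a single initial state $i$ over $\Sigma\times\Omega^*$ (here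 $\Omega=\{1\}$, with strict lexicographic order $\prec$ on $\Omega^*$, i.e. $1^k\prec1^l$ iff $k<l$), states are pairs $\langle p,N\rangle\in Q\times2^Q$, generated inductively starting from $\langle i,\emptyset\rangle$: for a generated $\langle p,N\rangle$ and $\langle p,\langle a,v\rangle,p'\rangle\in\Delta$ put $N'=\{q':\exists q\in N,\exists v'\,\langle q,\langle a,v'\rangle,q'\rangle\in\Delta\}\cup\{q:\exists v'\prec v,\ \langle p,\langle a,v'\rangle,q\rangle\in\Delta\}$; if $p'\notin N'$, the state $\langle p',N'\rangle$ and the transition $\langle\langle p,N\rangle,\langle a,v\rangle,\langle p',N'\rangle\rangle$ are added. Final states are $\{\langle f,N\rangle: f\in F,\ N\cap F=\emptyset\}$. Trimming keeps only states that are accessible (reachable from the initial state) and co-accessible (can reach a final state). *)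

theory Defs
  imports Main
begin

(* Transducers over letters 'a with outputs in {1}^*; the output word 1^k is
   represented by the natural number k, so the strict lexicographic order on
   {1}^* becomes < on nat. *)

type_synonym ('q,'a) trans = "('q \<times> 'a \<times> nat \<times> 'q) set"

definition underlying :: "('q,'a) trans \<Rightarrow> ('q \<times> 'a \<times> 'q) set" where
  "underlying \<Delta> = {(p, a, q). \<exists>v. (p, a, v, q) \<in> \<Delta>}"

definition reverse_aut :: "('q \<times> 'a \<times> 'q) set \<Rightarrow> ('q \<times> 'a \<times> 'q) set" where
  "reverse_aut T = {(q, a, p). (p, a, q) \<in> T}"

definition step_set :: "('q \<times> 'a \<times> 'q) set \<Rightarrow> 'q set \<Rightarrow> 'a \<Rightarrow> 'q set" where
  "step_set T P a = {q. \<exists>p\<in>P. (p, a, q) \<in> T}"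

inductive_set subset_det :: "'a set \<Rightarrow> ('q \<times> 'a \<times> 'q) set \<Rightarrow> 'q set \<Rightarrow> 'q set set"
  for \<Sigma> T I where
  init: "I \<in> subset_det \<Sigma> T I"
| step: "P \<in> subset_det \<Sigma> T I \<Longrightarrow> a \<in> \<Sigma> \<Longrightarrow> step_set T P a \<in> subset_det \<Sigma> T I"

definition sd_next :: "('q,'a) trans \<Rightarrow> 'q \<Rightarrow> 'q set \<Rightarrow> 'a \<Rightarrow> nat \<Rightarrow> 'q set" where
  "sd_next \<Delta> p N a v =
     {q'. \<exists>q\<in>N. \<exists>v'. (q, a, v', q') \<in> \<Delta>} \<union> {q. \<exists>v'. v' < v \<and> (p, a, v', q) \<in> \<Delta>}"

inductive_set sd_states :: "('q,'a) trans \<Rightarrow> 'q \<Rightarrow> ('q \<times> 'q set) set"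
  for \<Delta> i where
  init: "(i, {}) \<in> sd_states \<Delta> i"
| step: "(p, N) \<in> sd_states \<Delta> i \<Longrightarrow> (p, a, v, p') \<in> \<Delta> \<Longrightarrow>
         p' \<notin> sd_next \<Delta> p N a v \<Longrightarrow> (p', sd_next \<Delta> p N a v) \<in> sd_states \<Delta> i"

definition sd_trans :: "('q,'a) trans \<Rightarrow> 'q \<Rightarrow> ('q \<times> 'q set, 'a) trans" where
  "sd_trans \<Delta> i = {((p, N), a, v, (p', N')). (p, N) \<in> sd_states \<Delta> i \<and> (p, a, v, p') \<in> \<Delta> \<and>
       N' = sd_next \<Delta> p N a v \<and> p' \<notin> N'}"

definition sd_final :: "('q,'a) trans \<Rightarrow> 'q \<Rightarrow> 'q set \<Rightarrow> ('q \<times> 'q set) set" where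
  "sd_final \<Delta> i F = {(f, N). (f, N) \<in> sd_states \<Delta> i \<and> f \<in> F \<and> N \<inter> F = {}}"

definition trans_rel :: "('q,'a) trans \<Rightarrow> ('q \<times> 'q) set" where
  "trans_rel \<Delta> = {(p, q). \<exists>a v. (p, a, v, q) \<in> \<Delta>}"

definition trim_states :: "'q set \<Rightarrow> 'q set \<Rightarrow> ('q,'a) trans \<Rightarrow> 'q set" where
  "trim_states I F \<Delta> = {q. (\<exists>i\<in>I. (i, q) \<in> (trans_rel \<Delta>)\<^sup>*) \<and> (\<exists>f\<in>F. (q, f) \<in> (trans_rel \<Delta>)\<^sup>*)}"

definition trim_trans :: "'q set \<Rightarrow> 'q set \<Rightarrow> ('q,'a) trans \<Rightarrow> ('q,'a) trans" where
  "trim_trans I F \<Delta> = {(p, a, v, q). (p, a, v, q) \<in> \<Delta> \<and> p \<in> trim_states I F \<Delta> \<and> q \<in> trim_states I F \<Delta>}"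

(* The concrete transducer T_n: letter a_j is j, alphabet {1..n} *)
datatype st = S | Qst nat | Fst

definition Sigma_n :: "nat \<Rightarrow> nat set" where
  "Sigma_n n = {1..n}"

definition Delta_n :: "nat \<Rightarrow> (st, nat) trans" where
  "Delta_n n =
     {(S, j, i - 1, Qst i) | i j. 1 \<le> i \<and> i \<le> n \<and> 1 \<le> j \<and> j \<le> n}
   \<union> {(Qst i, j, n, Qst i) | i j. 1 \<le> i \<and> i \<le> n \<and> 1 \<le> j \<and> j \<le> n \<and> i \<noteq> 1 \<and> i \<noteq> j}
   \<union> {(Qst 1, j, n + j - 1, Qst j) | j. 1 \<le> j \<and> j \<le> n}
   \<union> {(Qst j, j, n - j + 1, Qst 1) | j. 1 \<le> j \<and> j \<le> n \<and> j \<noteq> 1}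
   \<union> {(Qst i, j, 2 * n - i + 1, Fst) | i j. 1 \<le> j \<and> j \<le> i \<and> i \<le> n}"

definition Tp_states :: "nat \<Rightarrow> (st \<times> st set) set" where
  "Tp_states n = trim_states {(S, {})} (sd_final (Delta_n n) S {Fst}) (sd_trans (Delta_n n) S)"

definition Tp_init :: "nat \<Rightarrow> (st \<times> st set) set" where
  "Tp_init n = {(S, {})} \<inter> Tp_states n"

definition Tp_final :: "nat \<Rightarrow> (st \<times> st set) set" where
  "Tp_final n = sd_final (Delta_n n) S {Fst} \<inter> Tp_states n"

definition Tp_trans :: "nat \<Rightarrow> (st \<times> st set, nat) trans" where
  "Tp_trans n = trim_trans {(S, {})} (sd_final (Delta_n n) S {Fst}) (sd_trans (Delta_n n) S)"

end

theory Submission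
  imports Defs "HOL-Combinatorics.Permutations"
begin

definition tau :: "nat \<Rightarrow> nat \<Rightarrow> nat" where
  "tau j k = (if k = 1 then j else if k = j then 1 else k)"

definition outp :: "nat \<Rightarrow> nat \<Rightarrow> nat \<Rightarrow> nat" where
  "outp n k j = (if k = 1 then n + j - 1 else if k = j then n - j + 1 else n)"

lemma tau_tau[simp]: "tau j (tau j k) = k"
  by (auto simp: tau_def)

lemma tau_inj: "inj (tau j)"
  by (metis injI tau_tau)

lemma tau_eq_iff[simp]: "tau j a = tau j b \<longleftrightarrow> a = b"
  by (metis tau_tau)

lemma tau_range: "1 \<le> j \<Longrightarrow> j \<le> n \<Longrightarrow> 1 \<le> k \<Longrightarrow> k \<le> n \<Longrightarrow> 1 \<le> tau j k \<and> tau j k \<le> n"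
  by (auto simp: tau_def)

lemma tau_1[simp]: "tau 1 = id"
  by (auto simp: tau_def)

lemma tau_Suc0[simp]: "tau (Suc 0) = id"
  by (auto simp: tau_def)

lemma D_S: "(S, j, v, q) \<in> Delta_n n \<longleftrightarrow> 1 \<le> j \<and> j \<le> n \<and> (\<exists>i. 1 \<le> i \<and> i \<le> n \<and> v = i - 1 \<and> q = Qst i)"
  unfolding Delta_n_def by auto

lemma D_F: "(Fst, j, v, q) \<notin> Delta_n n"
  unfolding Delta_n_def by auto

lemma D_Q: "(Qst k, j, v, q) \<in> Delta_n n \<longleftrightarrow> 1 \<le> k \<and> k \<le> n \<and> 1 \<le> j \<and>
   ((j \<le> n \<and> q = Qst (tau j k) \<and> v = outp n k j) \<or> (j \<le> k \<and> q = Fst \<and> v = 2 * n - k + 1))"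
  unfolding Delta_n_def tau_def outp_def by auto

definition succN :: "nat \<Rightarrow> st set \<Rightarrow> nat \<Rightarrow> st set" where
  "succN n N j = {q'. \<exists>q\<in>N. \<exists>v'. (q, j, v', q') \<in> Delta_n n}"

definition Qp :: "st set \<Rightarrow> nat set" where
  "Qp N = {k. Qst k \<in> N}"

definition okN :: "nat \<Rightarrow> st set \<Rightarrow> bool" where
  "okN n N \<longleftrightarrow> S \<notin> N \<and> Qp N \<subseteq> {1..n}"

lemma succN_Qst:
  assumes "okN n N" "1 \<le> j" "j \<le> n"
  shows "Qst m \<in> succN n N j \<longleftrightarrow> tau j m \<in> Qp N"
proof
  assume "Qst m \<in> succN n N j"
  then obtain q v' where q: "q \<in> N" "(q, j, v', Qst m) \<in> Delta_n n" by (auto simp: succN_def)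
  show "tau j m \<in> Qp N"
  proof (cases q)
    case S then show ?thesis using q assms by (auto simp: okN_def)
  next
    case (Qst k) then show ?thesis using q by (auto simp: D_Q Qp_def)
  next
    case Fst then show ?thesis using q D_F by auto
  qed
next
  assume "tau j m \<in> Qp N"
  then have "Qst (tau j m) \<in> N" "1 \<le> tau j m" "tau j m \<le> n" using assms by (auto simp: Qp_def okN_def)
  then show "Qst m \<in> succN n N j" using assms unfolding succN_def
    by (intro CollectI bexI[of _ "Qst (tau j m)"]) (auto simp: D_Q)
qed

lemma succN_Fst:
  assumes "okN n N" "1 \<le> j" "j \<le> n"
  shows "Fst \<in> succN n N j \<longleftrightarrow> (\<exists>i\<in>Qp N. j \<le> i)"
proof
  assume "Fst \<in> succN n N j"
  then obtain q v' where q: "q \<in> N" "(q, j, v', Fst) \<in> Delta_n n" by (auto simp: succN_def)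
  show "\<exists>i\<in>Qp N. j \<le> i"
  proof (cases q)
    case S then show ?thesis using q assms by (auto simp: okN_def)
  next
    case (Qst k) then show ?thesis using q by (auto simp: D_Q Qp_def)
  next
    case Fst then show ?thesis using q D_F by auto
  qed
next
  assume "\<exists>i\<in>Qp N. j \<le> i"
  then obtain i where "Qst i \<in> N" "j \<le> i" "i \<le> n" using assms by (auto simp: Qp_def okN_def)
  then show "Fst \<in> succN n N j" using assms unfolding succN_def
    by (intro CollectI bexI[of _ "Qst i"]) (auto simp: D_Q)
qed

lemma succN_S: "S \<notin> succN n N j"
  unfolding succN_def Delta_n_def by auto

lemma Qp_succN: "okN n N \<Longrightarrow> 1 \<le> j \<Longrightarrow> j \<le> n \<Longrightarrow> Qp (succN n N j) = tau j ` Qp N"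
  apply (auto simp: Qp_def[of "succN n N j"] succN_Qst)
  apply (metis imageI tau_tau)
  done

lemma okN_succN: "okN n N \<Longrightarrow> 1 \<le> j \<Longrightarrow> j \<le> n \<Longrightarrow> okN n (succN n N j)"
  using Qp_succN[of n N j] succN_S[of n N j] tau_range[of j n]
  by (auto simp: okN_def)

lemma sd_next_Q:
  assumes "1 \<le> k" "k \<le> n" "1 \<le> j" "j \<le> n"
  shows "sd_next (Delta_n n) (Qst k) N j (outp n k j) = succN n N j"
  using assms unfolding sd_next_def succN_def
  by (auto simp: D_Q outp_def)

lemma sd_next_F:
  assumes "1 \<le> j" "j \<le> k" "k \<le> n"
  shows "sd_next (Delta_n n) (Qst k) N j (2 * n - k + 1) = insert (Qst (tau j k)) (succN n N j)"
  using assms unfolding sd_next_def succN_def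
  by (auto simp: D_Q outp_def)

lemma sd_next_S:
  assumes "1 \<le> i" "i \<le> n" "1 \<le> j" "j \<le> n"
  shows "sd_next (Delta_n n) S {} j (i - 1) = Qst ` {1..<i}"
  using assms unfolding sd_next_def
  by (auto simp: D_S)

definition okS :: "nat \<Rightarrow> st \<times> st set \<Rightarrow> bool" where
  "okS n x \<longleftrightarrow> okN n (snd x) \<and> (\<forall>k. fst x = Qst k \<longrightarrow> 1 \<le> k \<and> k \<le> n) \<and> (fst x = S \<longrightarrow> snd x = {})"

lemma D_tgt: "(p, a, v, q) \<in> Delta_n n \<Longrightarrow> q \<noteq> S \<and> (\<forall>k. q = Qst k \<longrightarrow> 1 \<le> k \<and> k \<le> n)"
  unfolding Delta_n_def by (auto simp: tau_def)

lemma okN_sd_next: "okN n (sd_next (Delta_n n) p N a v)"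
  unfolding okN_def Qp_def sd_next_def using D_tgt[of _ a _ _ n] by fastforce

lemma sd_ok0: "(p0, N0) \<in> sd_states (Delta_n n) S \<Longrightarrow> okS n (p0, N0)"
proof (induction rule: sd_states.induct)
  case init
  then show ?case by (auto simp: okS_def okN_def Qp_def)
next
  case (step p N a v p')
  then show ?case using okN_sd_next[of n p N a v] D_tgt[OF step(2)] by (auto simp: okS_def)
qed

lemma sd_ok: "x \<in> sd_states (Delta_n n) S \<Longrightarrow> okS n x"
  using sd_ok0 by (cases x) auto

lemma mem_sd_trans: "((p, N), a, v, (p', N')) \<in> sd_trans D i \<longleftrightarrow>
   (p, N) \<in> sd_states D i \<and> (p, a, v, p') \<in> D \<and> N' = sd_next D p N a v \<and> p' \<notin> N'"
  unfolding sd_trans_def by auto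

lemma sd_trans_states: "(x, a, v, y) \<in> sd_trans D i \<Longrightarrow> x \<in> sd_states D i \<and> y \<in> sd_states D i"
  by (cases x; cases y) (auto simp: mem_sd_trans intro: sd_states.step)

lemma TQ:
  assumes "(Qst k, N) \<in> sd_states (Delta_n n) S" "Qst k \<notin> N" "1 \<le> j" "j \<le> n"
  shows "((Qst k, N), j, outp n k j, (Qst (tau j k), succN n N j)) \<in> sd_trans (Delta_n n) S
         \<and> Qst (tau j k) \<notin> succN n N j"
proof -
  have ok: "okS n (Qst k, N)" using sd_ok[OF assms(1)] .
  then have k: "1 \<le> k" "k \<le> n" and okN: "okN n N" by (auto simp: okS_def)
  have nin: "Qst (tau j k) \<notin> succN n N j"
    using succN_Qst[OF okN assms(3,4)] assms(2) by (simp add: Qp_def)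
  show ?thesis using nin assms k sd_next_Q[OF k assms(3,4)]
    by (simp add: mem_sd_trans D_Q)
qed

lemma TF:
  assumes "(Qst k, N) \<in> sd_states (Delta_n n) S" "1 \<le> j" "j \<le> k" "\<not> (\<exists>i\<in>Qp N. j \<le> i)"
  shows "((Qst k, N), j, 2 * n - k + 1, (Fst, insert (Qst (tau j k)) (succN n N j))) \<in> sd_trans (Delta_n n) S
         \<and> Fst \<notin> insert (Qst (tau j k)) (succN n N j)"
proof -
  have ok: "okS n (Qst k, N)" using sd_ok[OF assms(1)] .
  then have k: "1 \<le> k" "k \<le> n" and okN: "okN n N" by (auto simp: okS_def)
  have nin: "Fst \<notin> succN n N j"
    using succN_Fst[OF okN assms(2)] assms k by auto
  show ?thesis using nin assms k sd_next_F[OF assms(2,3) k(2)]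
    by (simp add: mem_sd_trans D_Q)
qed

lemma TS:
  assumes "1 \<le> i" "i \<le> n" "1 \<le> j" "j \<le> n"
  shows "((S, {}), j, i - 1, (Qst i, Qst ` {1..<i})) \<in> sd_trans (Delta_n n) S"
  using assms sd_next_S[OF assms] by (auto simp: mem_sd_trans D_S intro: sd_states.init)

lemma CQ:
  assumes "((Qst k, N), j, v, (p', N')) \<in> sd_trans (Delta_n n) S"
  shows "p' = Fst \<or> (p' = Qst (tau j k) \<and> N' = succN n N j \<and> 1 \<le> j \<and> j \<le> n)"
  using assms sd_next_Q[of k n j N] by (auto simp: mem_sd_trans D_Q)

lemma CS:
  assumes "((S, N), j, v, (p', N')) \<in> sd_trans (Delta_n n) S"
  shows "\<exists>i. 1 \<le> i \<and> i \<le> n \<and> p' = Qst i \<and> N' = Qst ` {1..<i}"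
proof -
  have "N = {}" using sd_ok[of "(S, N)" n] assms by (auto simp: mem_sd_trans okS_def)
  then show ?thesis using assms sd_next_S[of _ n j] by (auto simp: mem_sd_trans D_S)
qed

lemma CF: "((Fst, N), j, v, y) \<notin> sd_trans (Delta_n n) S"
  by (cases y) (auto simp: mem_sd_trans D_F)

abbreviation RR :: "nat \<Rightarrow> ((st \<times> st set) \<times> (st \<times> st set)) set" where
  "RR n \<equiv> trans_rel (sd_trans (Delta_n n) S)"

definition acc :: "nat \<Rightarrow> st \<times> st set \<Rightarrow> bool" where
  "acc n x \<longleftrightarrow> ((S, {}), x) \<in> (RR n)\<^sup>*"

definition coacc :: "nat \<Rightarrow> st \<times> st set \<Rightarrow> bool" where
  "coacc n x \<longleftrightarrow> (\<exists>f\<in>sd_final (Delta_n n) S {Fst}. (x, f) \<in> (RR n)\<^sup>*)"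

lemma Tp_states_iff: "x \<in> Tp_states n \<longleftrightarrow> acc n x \<and> coacc n x"
  unfolding Tp_states_def trim_states_def acc_def coacc_def by auto

lemma trans_relI: "(x, a, v, y) \<in> T \<Longrightarrow> (x, y) \<in> trans_rel T"
  unfolding trans_rel_def by auto

lemma acc_step: "acc n x \<Longrightarrow> (x, a, v, y) \<in> sd_trans (Delta_n n) S \<Longrightarrow> acc n y"
  unfolding acc_def by (meson rtrancl_into_rtrancl trans_relI)

lemma coacc_step: "coacc n y \<Longrightarrow> (x, a, v, y) \<in> sd_trans (Delta_n n) S \<Longrightarrow> coacc n x"
  unfolding coacc_def by (meson converse_rtrancl_into_rtrancl trans_relI)

lemma final_iff: "(Fst, N) \<in> sd_final (Delta_n n) S {Fst} \<longleftrightarrow> (Fst, N) \<in> sd_states (Delta_n n) S \<and> Fst \<notin> N"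
  unfolding sd_final_def by auto

lemma coacc_final: "y \<in> sd_final (Delta_n n) S {Fst} \<Longrightarrow> coacc n y"
  unfolding coacc_def by auto

lemma acc_init: "acc n (S, {})"
  unfolding acc_def by auto

lemma acc_sd: "acc n x \<Longrightarrow> x \<in> sd_states (Delta_n n) S"
  unfolding acc_def
proof (induction rule: rtrancl_induct)
  case base
  then show ?case by (rule sd_states.init)
next
  case (step y z)
  then obtain a v where "(y, a, v, z) \<in> sd_trans (Delta_n n) S" unfolding trans_rel_def by blast
  then show ?case using sd_trans_states[of y a v z] by simp
qed

lemma Tp_trans_iff: "(x, a, v, y) \<in> Tp_trans n \<longleftrightarrow>
   (x, a, v, y) \<in> sd_trans (Delta_n n) S \<and> x \<in> Tp_states n \<and> y \<in> Tp_states n"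
  unfolding Tp_trans_def trim_trans_def Tp_states_def by auto

lemma edge:
  assumes "x \<in> Tp_states n" "(x, a, v, y) \<in> sd_trans (Delta_n n) S" "coacc n y"
  shows "(x, a, v, y) \<in> Tp_trans n \<and> y \<in> Tp_states n"
  using assms acc_step[of n x a v y] by (auto simp: Tp_trans_iff Tp_states_iff)

lemma coacc_n:
  assumes "(Qst n, N) \<in> sd_states (Delta_n n) S" "Qst n \<notin> N"
  shows "coacc n (Qst n, N)"
proof -
  have ok: "okS n (Qst n, N)" using sd_ok[OF assms(1)] .
  then have n: "1 \<le> n" and okN: "okN n N" by (auto simp: okS_def)
  have "\<not> (\<exists>i\<in>Qp N. n \<le> i)" using okN assms(2) by (force simp: okN_def Qp_def)
  from TF[OF assms(1) n order.refl this] sd_trans_states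
  show ?thesis by (meson coacc_final coacc_step final_iff)
qed

lemma coacc_1:
  assumes "(Qst 1, N) \<in> sd_states (Delta_n n) S" "Qst 1 \<notin> N"
  shows "coacc n (Qst 1, N)"
proof -
  have ok: "okS n (Qst 1, N)" using sd_ok[OF assms(1)] .
  then have n: "1 \<le> n" by (auto simp: okS_def)
  from TQ[OF assms n order.refl]
  have t: "((Qst 1, N), n, outp n 1 n, (Qst n, succN n N n)) \<in> sd_trans (Delta_n n) S"
    "Qst n \<notin> succN n N n" by (auto simp: tau_def)
  show ?thesis using coacc_n[OF _ t(2)] sd_trans_states[OF t(1)] coacc_step[OF _ t(1)] by blast
qed

lemma coacc_Q:
  assumes "(Qst k, N) \<in> sd_states (Delta_n n) S" "Qst k \<notin> N"
  shows "coacc n (Qst k, N)"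
proof -
  have ok: "okS n (Qst k, N)" using sd_ok[OF assms(1)] .
  then have k: "1 \<le> k" "k \<le> n" by (auto simp: okS_def)
  show ?thesis
  proof (cases "k = 1")
    case True then show ?thesis using coacc_1 assms by blast
  next
    case False
    from TQ[OF assms k]
    have t: "((Qst k, N), k, outp n k k, (Qst 1, succN n N k)) \<in> sd_trans (Delta_n n) S"
      "Qst 1 \<notin> succN n N k" using False by (auto simp: tau_def)
    show ?thesis using coacc_1[OF _ t(2)] sd_trans_states[OF t(1)] coacc_step[OF _ t(1)] by blast
  qed
qed

lemma init_Tp: "1 \<le> n \<Longrightarrow> (S, {}) \<in> Tp_states n"
proof -
  assume n: "1 \<le> n"
  have t: "((S, {}), 1, 1 - 1, (Qst 1, Qst ` {1..<1})) \<in> sd_trans (Delta_n n) S"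
    using TS[of 1 n 1] n by auto
  have "coacc n (Qst 1, Qst ` {1..<1})"
    using coacc_Q[of 1 "Qst ` {1..<1}" n] sd_trans_states[OF t] by auto
  then show ?thesis using coacc_step[OF _ t] acc_init by (auto simp: Tp_states_iff)
qed

definition VV :: "nat \<Rightarrow> st set" where
  "VV n = {S, Fst} \<union> Qst ` {1..n}"

lemma sd_states_sub: "sd_states (Delta_n n) S \<subseteq> VV n \<times> Pow (VV n)"
proof
  fix x assume "x \<in> sd_states (Delta_n n) S"
  then have ok: "okS n x" by (rule sd_ok)
  obtain p N where x: "x = (p, N)" by (cases x)
  have "p \<in> VV n" using ok x by (cases p) (auto simp: VV_def okS_def)
  moreover have "N \<subseteq> VV n"
  proof
    fix q assume "q \<in> N"
    then show "q \<in> VV n" using ok x by (cases q) (auto simp: VV_def okS_def okN_def Qp_def)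
  qed
  ultimately show "x \<in> VV n \<times> Pow (VV n)" using x by auto
qed

lemma finite_sd_states: "finite (sd_states (Delta_n n) S)"
  by (rule finite_subset[OF sd_states_sub]) (auto simp: VV_def)

lemma subset_det_sub: "subset_det \<Sigma> T I \<subseteq> insert I (Pow {q. \<exists>p a. (p, a, q) \<in> T})"
proof
  fix P assume "P \<in> subset_det \<Sigma> T I"
  then show "P \<in> insert I (Pow {q. \<exists>p a. (p, a, q) \<in> T})"
    by (induction rule: subset_det.induct) (auto simp: step_set_def)
qed

lemma finite_subset_det: "finite {q. \<exists>p a. (p, a, q) \<in> T} \<Longrightarrow> finite (subset_det \<Sigma> T I)"
  by (rule finite_subset[OF subset_det_sub]) auto

lemma Tp_trans_sd: "(x, a, v, y) \<in> Tp_trans n \<Longrightarrow> x \<in> sd_states (Delta_n n) S \<and> y \<in> sd_states (Delta_n n) S"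
  by (auto simp: Tp_trans_iff dest: sd_trans_states)

lemma finite_LD: "finite (subset_det \<Sigma> (underlying (Tp_trans n)) I)"
  apply (rule finite_subset_det)
  apply (rule finite_subset[OF _ finite_sd_states[of n]])
  apply (auto simp: underlying_def dest: Tp_trans_sd)
  done

lemma finite_RD: "finite (subset_det \<Sigma> (reverse_aut (underlying (Tp_trans n))) I)"
  apply (rule finite_subset_det)
  apply (rule finite_subset[OF _ finite_sd_states[of n]])
  apply (auto simp: underlying_def reverse_aut_def dest: Tp_trans_sd)
  done

abbreviation UL :: "nat \<Rightarrow> ((st \<times> st set) \<times> nat \<times> (st \<times> st set)) set" where
  "UL n \<equiv> underlying (Tp_trans n)"

abbreviation LD :: "nat \<Rightarrow> (st \<times> st set) set set" where
  "LD n \<equiv> subset_det (Sigma_n n) (UL n) (Tp_init n)"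

definition QG :: "(st \<times> st set) set \<Rightarrow> (nat \<times> nat set) set" where
  "QG P = {(k, Qp N) | k N. (Qst k, N) \<in> P}"

definition graph :: "nat \<Rightarrow> (nat \<Rightarrow> nat) \<Rightarrow> (nat \<times> nat set) set" where
  "graph n \<pi> = (\<lambda>i. (\<pi> i, \<pi> ` {1..<i})) ` {1..n}"

definition Good :: "nat \<Rightarrow> (nat \<Rightarrow> nat) \<Rightarrow> (st \<times> st set) set \<Rightarrow> bool" where
  "Good n \<pi> P \<longleftrightarrow> P \<in> LD n \<and> P \<subseteq> Tp_states n \<and> S \<notin> fst ` P \<and> QG P = graph n \<pi> \<and> inj_on \<pi> {1..n}"

lemma mem_step_UL: "y \<in> step_set (UL n) P j \<longleftrightarrow> (\<exists>x\<in>P. \<exists>v. (x, j, v, y) \<in> Tp_trans n)"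
  unfolding step_set_def underlying_def by auto

lemma Tp_init_eq: "1 \<le> n \<Longrightarrow> Tp_init n = {(S, {})}"
  using init_Tp unfolding Tp_init_def by auto

lemma tgt_not_S: "(x, a, v, y) \<in> Tp_trans n \<Longrightarrow> fst y \<noteq> S"
  by (cases x; cases y) (auto simp: Tp_trans_iff mem_sd_trans dest: D_tgt)

lemma stepL:
  assumes G: "Good n \<pi> P" and j: "1 \<le> j" "j \<le> n"
  shows "Good n (tau j \<circ> \<pi>) (step_set (UL n) P j)"
proof -
  let ?P' = "step_set (UL n) P j"
  have inj: "inj_on \<pi> {1..n}" using G by (simp add: Good_def)
  have inS: "x \<in> sd_states (Delta_n n) S" if "x \<in> P" for x
  proof -
    have "x \<in> Tp_states n" using G that by (auto simp: Good_def)
    then show ?thesis using acc_sd by (auto simp: Tp_states_iff)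
  qed
  have "P \<in> LD n" using G by (simp add: Good_def)
  moreover have "j \<in> Sigma_n n" using j by (simp add: Sigma_n_def)
  ultimately have m1: "?P' \<in> LD n" by (rule subset_det.step)
  have m2: "?P' \<subseteq> Tp_states n" by (auto simp: mem_step_UL Tp_trans_iff)
  have m3: "S \<notin> fst ` ?P'" by (auto simp: mem_step_UL) (metis fst_conv tgt_not_S)
  have m4: "inj_on (tau j \<circ> \<pi>) {1..n}"
    by (rule comp_inj_on[OF inj inj_on_subset[OF tau_inj subset_UNIV]])
  have sub: "QG ?P' \<subseteq> graph n (tau j \<circ> \<pi>)"
  proof
    fix z assume "z \<in> QG ?P'"
    then obtain k' N' where z: "z = (k', Qp N')" and y: "(Qst k', N') \<in> ?P'" by (auto simp: QG_def)
    then obtain x v where x: "x \<in> P" "(x, j, v, (Qst k', N')) \<in> Tp_trans n" by (auto simp: mem_step_UL)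
    obtain p N where xp: "x = (p, N)" by (cases x)
    have tr: "((p, N), j, v, (Qst k', N')) \<in> sd_trans (Delta_n n) S" using x xp by (simp add: Tp_trans_iff)
    have okN: "okN n N" using sd_ok[OF inS[OF x(1)]] xp by (simp add: okS_def)
    show "z \<in> graph n (tau j \<circ> \<pi>)"
    proof (cases p)
      case S then have "S \<in> fst ` P" using x xp by force
      then show ?thesis using G by (simp add: Good_def)
    next
      case Fst then show ?thesis using tr CF by auto
    next
      case (Qst k)
      then have k': "k' = tau j k" "N' = succN n N j" using CQ[of k N j v "Qst k'" N' n] tr by auto
      have "(k, Qp N) \<in> QG P" using x xp Qst by (auto simp: QG_def)
      then have "(k, Qp N) \<in> graph n \<pi>" using G by (simp add: Good_def)
      then obtain i where i: "i \<in> {1..n}" "k = \<pi> i" "Qp N = \<pi> ` {1..<i}"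
        unfolding graph_def by blast
      have "Qp N' = tau j ` \<pi> ` {1..<i}" using k' i Qp_succN[OF okN j] by simp
      then show ?thesis using z k' i unfolding graph_def by (simp add: image_comp)
    qed
  qed
  have sup: "graph n (tau j \<circ> \<pi>) \<subseteq> QG ?P'"
  proof
    fix z assume "z \<in> graph n (tau j \<circ> \<pi>)"
    then obtain i where i: "i \<in> {1..n}" "z = (tau j (\<pi> i), tau j ` \<pi> ` {1..<i})"
      unfolding graph_def by (auto simp add: image_comp)
    have "(\<pi> i, \<pi> ` {1..<i}) \<in> graph n \<pi>" using i unfolding graph_def by blast
    then have "(\<pi> i, \<pi> ` {1..<i}) \<in> QG P" using G by (simp add: Good_def)
    then obtain N where N: "(Qst (\<pi> i), N) \<in> P" "Qp N = \<pi> ` {1..<i}" by (auto simp: QG_def)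
    have sdN: "(Qst (\<pi> i), N) \<in> sd_states (Delta_n n) S" using inS[OF N(1)] .
    have okN: "okN n N" using sd_ok[OF sdN] by (simp add: okS_def)
    have nin: "Qst (\<pi> i) \<notin> N"
    proof
      assume "Qst (\<pi> i) \<in> N"
      then have "\<pi> i \<in> \<pi> ` {1..<i}" using N(2) by (auto simp: Qp_def)
      then obtain i' where "i' \<in> {1..<i}" "\<pi> i = \<pi> i'" by auto
      moreover have "i' \<in> {1..n}" "i' \<noteq> i" using \<open>i' \<in> {1..<i}\<close> i by auto
      ultimately show False using inj i unfolding inj_on_def by blast
    qed
    from TQ[OF sdN nin j]
    have t: "((Qst (\<pi> i), N), j, outp n (\<pi> i) j, (Qst (tau j (\<pi> i)), succN n N j)) \<in> sd_trans (Delta_n n) S"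
      and nin2: "Qst (tau j (\<pi> i)) \<notin> succN n N j" by auto
    have co: "coacc n (Qst (tau j (\<pi> i)), succN n N j)"
      using coacc_Q[OF _ nin2] sd_trans_states[OF t] by blast
    have "(Qst (\<pi> i), N) \<in> Tp_states n" using G N(1) by (auto simp: Good_def)
    from edge[OF this t co]
    have "(Qst (tau j (\<pi> i)), succN n N j) \<in> ?P'" using N(1) by (auto simp: mem_step_UL)
    moreover have "Qp (succN n N j) = tau j ` \<pi> ` {1..<i}" using Qp_succN[OF okN j] N(2) by simp
    ultimately show "z \<in> QG ?P'" using i unfolding QG_def by blast
  qed
  show ?thesis using m1 m2 m3 m4 sub sup by (auto simp: Good_def)
qed

lemma inS_Tp: "x \<in> Tp_states n \<Longrightarrow> x \<in> sd_states (Delta_n n) S"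
  using acc_sd by (auto simp: Tp_states_iff)

definition P1 :: "nat \<Rightarrow> (st \<times> st set) set" where
  "P1 n = step_set (UL n) (Tp_init n) 1"

lemma P1_mem: "1 \<le> n \<Longrightarrow> y \<in> P1 n \<longleftrightarrow> (\<exists>i. 1 \<le> i \<and> i \<le> n \<and> y = (Qst i, Qst ` {1..<i}))"
proof
  assume n: "1 \<le> n"
  assume "y \<in> P1 n"
  then obtain v where "((S, {}), 1, v, y) \<in> Tp_trans n" using n
    by (auto simp: P1_def mem_step_UL Tp_init_eq)
  then have "((S, {}), 1, v, y) \<in> sd_trans (Delta_n n) S" by (simp add: Tp_trans_iff)
  then show "\<exists>i. 1 \<le> i \<and> i \<le> n \<and> y = (Qst i, Qst ` {1..<i})"
    using CS[of "{}" 1 v "fst y" "snd y" n] by (cases y) auto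
next
  assume n: "1 \<le> n"
  assume "\<exists>i. 1 \<le> i \<and> i \<le> n \<and> y = (Qst i, Qst ` {1..<i})"
  then obtain i where i: "1 \<le> i" "i \<le> n" "y = (Qst i, Qst ` {1..<i})" by blast
  have t: "((S, {}), 1, i - 1, y) \<in> sd_trans (Delta_n n) S" using TS[OF i(1,2), of 1] n i by simp
  have "Qst i \<notin> Qst ` {1..<i}" by auto
  then have "coacc n y" using coacc_Q[of i "Qst ` {1..<i}" n] sd_trans_states[OF t] i by simp
  from edge[OF init_Tp[OF n] t this] show "y \<in> P1 n"
    using n by (auto simp: P1_def mem_step_UL Tp_init_eq)
qed

lemma Good_P1: "1 \<le> n \<Longrightarrow> Good n id (P1 n)"
proof -
  assume n: "1 \<le> n"
  have m1: "P1 n \<in> LD n" unfolding P1_def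
    by (rule subset_det.step[OF subset_det.init]) (use n in \<open>simp add: Sigma_n_def\<close>)
  have m2: "P1 n \<subseteq> Tp_states n" by (auto simp: P1_def mem_step_UL Tp_trans_iff)
  have m3: "S \<notin> fst ` P1 n" using P1_mem[OF n] by auto
  have Qp1: "Qp (Qst ` {1..<i}) = {1..<i}" for i by (auto simp: Qp_def)
  have m4: "QG (P1 n) = graph n id"
  proof
    show "QG (P1 n) \<subseteq> graph n id"
      using P1_mem[OF n] Qp1 unfolding QG_def graph_def by fastforce
    show "graph n id \<subseteq> QG (P1 n)"
    proof
      fix z assume "z \<in> graph n id"
      then obtain i where i: "i \<in> {1..n}" "z = (i, {1..<i})" unfolding graph_def by auto
      then have "(Qst i, Qst ` {1..<i}) \<in> P1 n" using P1_mem[OF n] by auto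
      then show "z \<in> QG (P1 n)" using i Qp1[of i] unfolding QG_def by blast
    qed
  qed
  show ?thesis using m1 m2 m3 m4 by (simp add: Good_def)
qed

lemma P1_noF: "1 \<le> n \<Longrightarrow> Fst \<notin> fst ` P1 n"
  using P1_mem by fastforce

lemma finalL:
  assumes G: "Good n \<pi> P" and n: "1 \<le> n"
  shows "Good n \<pi> (step_set (UL n) P 1) \<and> Fst \<in> fst ` step_set (UL n) P 1"
proof -
  have "Good n (tau 1 \<circ> \<pi>) (step_set (UL n) P 1)" using stepL[OF G order.refl n] .
  moreover have "tau 1 \<circ> \<pi> = \<pi>" by (simp add: fun_eq_iff tau_def)
  ultimately have g: "Good n \<pi> (step_set (UL n) P 1)" by metis
  have "(\<pi> 1, \<pi> ` {1..<1}) \<in> graph n \<pi>" using n unfolding graph_def by force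
  then have "(\<pi> 1, {}) \<in> QG P" using G by (simp add: Good_def)
  then obtain N where N: "(Qst (\<pi> 1), N) \<in> P" "Qp N = {}" by (auto simp: QG_def)
  have tp: "(Qst (\<pi> 1), N) \<in> Tp_states n" using G N(1) by (auto simp: Good_def)
  have sdN: "(Qst (\<pi> 1), N) \<in> sd_states (Delta_n n) S" using inS_Tp[OF tp] .
  have k: "1 \<le> \<pi> 1" using sd_ok[OF sdN] by (simp add: okS_def)
  from TF[OF sdN order.refl k] N(2)
  have t: "((Qst (\<pi> 1), N), 1, 2 * n - \<pi> 1 + 1, (Fst, insert (Qst (tau 1 (\<pi> 1))) (succN n N 1))) \<in> sd_trans (Delta_n n) S"
     and nf: "Fst \<notin> insert (Qst (tau 1 (\<pi> 1))) (succN n N 1)" by auto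
  have "coacc n (Fst, insert (Qst (tau 1 (\<pi> 1))) (succN n N 1))"
    using coacc_final final_iff sd_trans_states[OF t] nf by blast
  from edge[OF tp t this] N(1)
  have "(Fst, insert (Qst (tau 1 (\<pi> 1))) (succN n N 1)) \<in> step_set (UL n) P 1"
    by (auto simp: mem_step_UL)
  then show ?thesis using g by force
qed

lemma tau_transpose:
  assumes "a \<noteq> 1" "b \<noteq> 1" "a \<noteq> b"
  shows "Transposition.transpose a b = tau a \<circ> tau b \<circ> tau a"
  using assms by (auto simp: fun_eq_iff tau_def Transposition.transpose_def)

lemma transpose_1: "Transposition.transpose 1 b = tau b" "Transposition.transpose a 1 = tau a"
  by (auto simp: fun_eq_iff tau_def Transposition.transpose_def)

lemma all_perms:
  assumes n: "1 \<le> n" and p: "\<pi> permutes {1..n}"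
  shows "\<exists>P. Good n \<pi> P"
  using p finite_atLeastAtMost[of 1 n]
proof (induction rule: permutes_induct)
  case id
  then show ?case using Good_P1[OF n] by blast
next
  case (swap a b p)
  then obtain P where P: "Good n p P" by blast
  have ab: "1 \<le> a" "a \<le> n" "1 \<le> b" "b \<le> n" using swap by auto
  show ?case
  proof (cases "a = 1")
    case True
    then have "Transposition.transpose a b \<circ> p = tau b \<circ> p" using transpose_1(1)[of b] by simp
    then show ?thesis using stepL[OF P ab(3,4)] by metis
  next
    case a: False
    show ?thesis
    proof (cases "b = 1")
      case True
      then have "Transposition.transpose a b \<circ> p = tau a \<circ> p" using transpose_1(2)[of a] by simp
      then show ?thesis using stepL[OF P ab(1,2)] by metis
    next
      case False
      have "Good n (tau a \<circ> (tau b \<circ> (tau a \<circ> p))) (step_set (UL n) (step_set (UL n) (step_set (UL n) P a) b) a)"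
        by (rule stepL[OF stepL[OF stepL[OF P ab(1,2)] ab(3,4)] ab(1,2)])
      moreover have "Transposition.transpose a b \<circ> p = tau a \<circ> (tau b \<circ> (tau a \<circ> p))"
        using tau_transpose[OF a False swap(3)] by (simp add: comp_assoc)
      ultimately show ?thesis by metis
    qed
  qed
qed

lemma graph_inj:
  assumes p: "\<pi> permutes {1..n}" and q: "\<sigma> permutes {1..n}" and g: "graph n \<pi> = graph n \<sigma>"
  shows "\<pi> = \<sigma>"
proof
  fix i
  show "\<pi> i = \<sigma> i"
  proof (cases "i \<in> {1..n}")
    case False
    then show ?thesis using permutes_not_in[OF p] permutes_not_in[OF q] by simp
  next
    case True
    then have "(\<pi> i, \<pi> ` {1..<i}) \<in> graph n \<sigma>" using g unfolding graph_def by blast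
    then obtain i' where i': "i' \<in> {1..n}" "\<pi> i = \<sigma> i'" "\<pi> ` {1..<i} = \<sigma> ` {1..<i'}"
      unfolding graph_def by blast
    have "card (\<pi> ` {1..<i}) = card {1..<i}"
      by (rule card_image[OF inj_on_subset[OF permutes_inj[OF p] subset_UNIV]])
    moreover have "card (\<sigma> ` {1..<i'}) = card {1..<i'}"
      by (rule card_image[OF inj_on_subset[OF permutes_inj[OF q] subset_UNIV]])
    ultimately have "i - 1 = i' - 1" using i'(3) by simp
    then have "i = i'" using True i'(1) by auto
    then show ?thesis using i'(2) by simp
  qed
qed

lemma left_bound:
  assumes n: "1 \<le> n"
  shows "fact n + 2 \<le> card (LD n)"
proof -
  define g where "g = (\<lambda>P :: (st \<times> st set) set. (S \<in> fst ` P, Fst \<in> fst ` P, QG P))"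
  define h where "h = (\<lambda>\<pi>. (False, True, graph n \<pi>))"
  let ?perms = "{\<pi>. \<pi> permutes {1..n}}"
  have A: "h ` ?perms \<subseteq> g ` LD n"
  proof
    fix z assume "z \<in> h ` ?perms"
    then obtain \<pi> where p: "\<pi> permutes {1..n}" "z = h \<pi>" by auto
    obtain P where P: "Good n \<pi> P" using all_perms[OF n p(1)] by blast
    define P' where "P' = step_set (UL n) P 1"
    have f: "Good n \<pi> P'" "Fst \<in> fst ` P'" using finalL[OF P n] unfolding P'_def by auto
    then have "S \<notin> fst ` P'" "QG P' = graph n \<pi>" "P' \<in> LD n" unfolding Good_def by auto
    then have "g P' = z" using f(2) p(2) unfolding g_def h_def by simp
    then show "z \<in> g ` LD n" using \<open>P' \<in> LD n\<close> by blast
  qed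
  have B: "(True, False, {}) \<in> g ` LD n"
  proof -
    have "Tp_init n \<in> LD n" by (rule subset_det.init)
    moreover have "QG {(S, {})} = {}" by (auto simp: QG_def)
    then have "g (Tp_init n) = (True, False, {})" using Tp_init_eq[OF n] by (simp add: g_def)
    ultimately show ?thesis by (metis image_eqI)
  qed
  have C: "(False, False, graph n id) \<in> g ` LD n"
  proof -
    have "P1 n \<in> LD n" "QG (P1 n) = graph n id" "S \<notin> fst ` P1 n" using Good_P1[OF n] unfolding Good_def by auto
    moreover have "Fst \<notin> fst ` P1 n" by (rule P1_noF[OF n])
    ultimately have "g (P1 n) = (False, False, graph n id)" unfolding g_def by simp
    then show ?thesis using \<open>P1 n \<in> LD n\<close> by (metis image_eqI)
  qed
  have injh: "inj_on h ?perms" unfolding inj_on_def h_def using graph_inj by blast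
  have cardh: "card (h ` ?perms) = fact n"
    using card_image[OF injh] card_permutations[of "{1..n}" n] by simp
  have fin: "finite (h ` ?perms)" using finite_permutations[of "{1..n}"] by simp
  have n1: "(False, False, graph n id) \<notin> h ` ?perms" unfolding h_def by auto
  have n2: "(True, False, {}) \<notin> insert (False, False, graph n id) (h ` ?perms)" unfolding h_def by auto
  have c1: "card (insert (True, False, {}) (insert (False, False, graph n id) (h ` ?perms))) = fact n + 2"
    using cardh fin n1 n2 by (simp add: card_insert_disjoint)
  have c2: "card (insert (True, False, {}) (insert (False, False, graph n id) (h ` ?perms))) \<le> card (g ` LD n)"
  proof (rule card_mono)
    show "finite (g ` LD n)" using finite_LD by blast
    show "insert (True, False, {}) (insert (False, False, graph n id) (h ` ?perms)) \<subseteq> g ` LD n"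
      using A B C by blast
  qed
  have c3: "card (g ` LD n) \<le> card (LD n)" by (rule card_image_le[OF finite_LD])
  show ?thesis using c1 c2 c3 by linarith
qed

lemma und_Q: "(Qst k, j, q) \<in> underlying (Delta_n n) \<longleftrightarrow> 1 \<le> k \<and> k \<le> n \<and> 1 \<le> j \<and>
   ((j \<le> n \<and> q = Qst (tau j k)) \<or> (j \<le> k \<and> q = Fst))"
  unfolding underlying_def by (auto simp: D_Q)

lemma und_S: "(S, j, q) \<in> underlying (Delta_n n) \<longleftrightarrow> 1 \<le> j \<and> j \<le> n \<and> (\<exists>i. 1 \<le> i \<and> i \<le> n \<and> q = Qst i)"
  unfolding underlying_def by (auto simp: D_S)

lemma und_F: "(Fst, j, q) \<notin> underlying (Delta_n n)"
  unfolding underlying_def by (auto simp: D_F)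

lemma mem_step_und: "q \<in> step_set (underlying (Delta_n n)) X j \<longleftrightarrow> (\<exists>p\<in>X. (p, j, q) \<in> underlying (Delta_n n))"
  unfolding step_set_def by auto

lemma mem_step_rev: "q \<in> step_set (reverse_aut T) X j \<longleftrightarrow> (\<exists>p\<in>X. (q, j, p) \<in> T)"
  unfolding step_set_def reverse_aut_def by auto

lemma ls1: "1 \<le> j \<Longrightarrow> j \<le> n \<Longrightarrow> step_set (underlying (Delta_n n)) {S} j = Qst ` {1..n}"
  by (auto simp: mem_step_und und_S)

lemma ls2:
  assumes "1 \<le> j" "j \<le> n"
  shows "step_set (underlying (Delta_n n)) (Qst ` {1..n}) j = insert Fst (Qst ` {1..n})"
proof (rule set_eqI)
  fix q
  show "q \<in> step_set (underlying (Delta_n n)) (Qst ` {1..n}) j \<longleftrightarrow> q \<in> insert Fst (Qst ` {1..n})"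
  proof (cases q)
    case S then show ?thesis by (auto simp: mem_step_und und_Q)
  next
    case Fst then show ?thesis using assms by (auto simp: mem_step_und und_Q intro!: bexI[of _ "Qst n"])
  next
    case (Qst m)
    show ?thesis
    proof
      assume "q \<in> step_set (underlying (Delta_n n)) (Qst ` {1..n}) j"
      then show "q \<in> insert Fst (Qst ` {1..n})" using Qst assms by (auto simp: mem_step_und und_Q tau_def)
    next
      assume "q \<in> insert Fst (Qst ` {1..n})"
      then have m: "1 \<le> m" "m \<le> n" using Qst by auto
      then have "(Qst (tau j m), j, q) \<in> underlying (Delta_n n)" "Qst (tau j m) \<in> Qst ` {1..n}"
        using Qst assms tau_range[OF assms m] by (auto simp: und_Q)
      then show "q \<in> step_set (underlying (Delta_n n)) (Qst ` {1..n}) j" by (auto simp: mem_step_und)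
    qed
  qed
qed

lemma ls3:
  assumes "1 \<le> j" "j \<le> n"
  shows "step_set (underlying (Delta_n n)) (insert Fst (Qst ` {1..n})) j = insert Fst (Qst ` {1..n})"
proof -
  have "step_set (underlying (Delta_n n)) (insert Fst (Qst ` {1..n})) j = step_set (underlying (Delta_n n)) (Qst ` {1..n}) j"
    using und_F by (auto simp: mem_step_und)
  then show ?thesis using ls2[OF assms] by simp
qed

lemma left_new:
  assumes n: "1 \<le> n"
  shows "subset_det (Sigma_n n) (underlying (Delta_n n)) {S} = {{S}, Qst ` {1..n}, insert Fst (Qst ` {1..n})}"
proof
  show "subset_det (Sigma_n n) (underlying (Delta_n n)) {S} \<subseteq> {{S}, Qst ` {1..n}, insert Fst (Qst ` {1..n})}"
  proof
    fix P assume "P \<in> subset_det (Sigma_n n) (underlying (Delta_n n)) {S}"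
    then show "P \<in> {{S}, Qst ` {1..n}, insert Fst (Qst ` {1..n})}"
    proof (induction rule: subset_det.induct)
      case init then show ?case by simp
    next
      case (step P a)
      then have a: "1 \<le> a" "a \<le> n" by (auto simp: Sigma_n_def)
      from step.IH show ?case using ls1[OF a] ls2[OF a] ls3[OF a] by auto
    qed
  qed
next
  have a: "1 \<in> Sigma_n n" using n by (simp add: Sigma_n_def)
  have i: "{S} \<in> subset_det (Sigma_n n) (underlying (Delta_n n)) {S}" by (rule subset_det.init)
  have ii: "Qst ` {1..n} \<in> subset_det (Sigma_n n) (underlying (Delta_n n)) {S}"
    using subset_det.step[OF i a] ls1[of 1 n] n by simp
  have iii: "insert Fst (Qst ` {1..n}) \<in> subset_det (Sigma_n n) (underlying (Delta_n n)) {S}"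
    using subset_det.step[OF ii a] ls2[of 1 n] n by simp
  show "{{S}, Qst ` {1..n}, insert Fst (Qst ` {1..n})} \<subseteq> subset_det (Sigma_n n) (underlying (Delta_n n)) {S}"
    using i ii iii by blast
qed

lemma card_left_new:
  assumes n: "1 \<le> n"
  shows "card (subset_det (Sigma_n n) (underlying (Delta_n n)) {S}) = 3"
proof -
  have "Qst 1 \<in> Qst ` {1..n}" using n by auto
  then have d1: "{S} \<noteq> Qst ` {1..n}" "{S} \<noteq> insert Fst (Qst ` {1..n})" by auto
  have d2: "Qst ` {1..n} \<noteq> insert Fst (Qst ` {1..n})" by auto
  show ?thesis unfolding left_new[OF n] using d1 d2 by simp
qed

lemma tau_img_sub: "1 \<le> l \<Longrightarrow> l \<le> n \<Longrightarrow> Y \<subseteq> {1..n} \<Longrightarrow> tau l ` Y \<subseteq> {1..n}"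
  by (auto simp: tau_def)

lemma gen_swap:
  assumes base: "\<And>j. 1 \<le> j \<Longrightarrow> j \<le> n \<Longrightarrow> H {j..n}"
    and cl: "\<And>Y l. H Y \<Longrightarrow> 1 \<le> l \<Longrightarrow> l \<le> n \<Longrightarrow> Y \<subseteq> {1..n} \<Longrightarrow> H (tau l ` Y)"
    and HY: "H Y" "Y \<subseteq> {1..n}" and ab: "a \<in> {1..n}" "b \<in> {1..n}"
  shows "H (Transposition.transpose a b ` Y)"
proof (cases "a = b")
  case True then show ?thesis using HY by simp
next
  case ne: False
  show ?thesis
  proof (cases "a = 1")
    case True then show ?thesis using cl[OF HY(1) _ _ HY(2), of b] ab transpose_1(1)[of b] by auto
  next
    case a: False
    show ?thesis
    proof (cases "b = 1")
      case True then show ?thesis using cl[OF HY(1) _ _ HY(2), of a] ab transpose_1(2)[of a] by auto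
    next
      case b: False
      have s1: "tau a ` Y \<subseteq> {1..n}" using tau_img_sub ab HY by auto
      have h1: "H (tau a ` Y)" using cl[OF HY(1) _ _ HY(2)] ab by auto
      have s2: "tau b ` tau a ` Y \<subseteq> {1..n}" using tau_img_sub[OF _ _ s1] ab by auto
      have h2: "H (tau b ` tau a ` Y)" using cl[OF h1 _ _ s1] ab by auto
      have h3: "H (tau a ` tau b ` tau a ` Y)" using cl[OF h2 _ _ s2] ab by auto
      have "Transposition.transpose a b ` Y = tau a ` tau b ` tau a ` Y"
        using tau_transpose[OF a b ne] by (simp add: image_comp)
      then show ?thesis using h3 by simp
    qed
  qed
qed

lemma gen:
  assumes base: "\<And>j. 1 \<le> j \<Longrightarrow> j \<le> n \<Longrightarrow> H {j..n}"
    and cl: "\<And>Y l. H Y \<Longrightarrow> 1 \<le> l \<Longrightarrow> l \<le> n \<Longrightarrow> Y \<subseteq> {1..n} \<Longrightarrow> H (tau l ` Y)"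
    and X: "X \<subseteq> {1..n}" "X \<noteq> {}"
  shows "H X"
proof -
  define c where "c = card X"
  define U where "U = {n + 1 - c..n}"
  have fX: "finite X" using X finite_subset by blast
  have c1: "1 \<le> c" using X fX by (simp add: c_def Suc_le_eq card_gt_0_iff)
  have cn: "c \<le> n" using card_mono[OF _ X(1)] by (simp add: c_def)
  have cU: "card U = c" using c1 cn by (simp add: U_def)
  have HU: "H U" unfolding U_def by (rule base) (use c1 cn in auto)
  have Usub: "U \<subseteq> {1..n}" using c1 cn by (auto simp: U_def)
  have main: "\<And>X. X \<subseteq> {1..n} \<Longrightarrow> card X = c \<Longrightarrow> card (X - U) = d \<Longrightarrow> H X" for d
  proof (induction d)
    case 0
    then have fX: "finite X" using finite_subset by blast
    then have "X \<subseteq> U" using 0 by auto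
    then have "X = U" using card_subset_eq[of U X] cU 0 by (auto simp: U_def)
    then show ?case using HU by simp
  next
    case (Suc d)
    then have fX: "finite X" using finite_subset by blast
    obtain y where y: "y \<in> X" "y \<notin> U" using Suc.prems(3) by (metis Diff_eq_empty_iff card.empty nat.distinct(1) subsetI)
    have "\<not> U \<subseteq> X"
    proof
      assume "U \<subseteq> X"
      then have "U = X" using card_subset_eq[OF fX] cU Suc.prems(2) by simp
      then show False using y by simp
    qed
    then obtain z where z: "z \<in> U" "z \<notin> X" by blast
    define X' where "X' = insert z (X - {y})"
    have X'sub: "X' \<subseteq> {1..n}" using Suc.prems(1) z Usub by (auto simp: X'_def)
    have "card X > 0" using fX y card_gt_0_iff by blast
    then have cX': "card X' = c" using Suc.prems(2) fX y z by (simp add: X'_def card_Diff_singleton)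
    have "X' - U = (X - U) - {y}" using z y by (auto simp: X'_def)
    then have "card (X' - U) = d" using Suc.prems(3) y fX by (simp add: card_Diff_singleton)
    then have HX': "H X'" using Suc.IH X'sub cX' by blast
    have "Transposition.transpose y z ` X' = X"
    proof
      show "Transposition.transpose y z ` X' \<subseteq> X"
        using y z by (auto simp: X'_def Transposition.transpose_def)
      show "X \<subseteq> Transposition.transpose y z ` X'"
      proof
        fix x assume x: "x \<in> X"
        show "x \<in> Transposition.transpose y z ` X'"
        proof (cases "x = y")
          case True
          then have "x = Transposition.transpose y z z" by simp
          then show ?thesis by (auto simp: X'_def)
        next
          case False
          then have "x = Transposition.transpose y z x" using x z by (auto simp: Transposition.transpose_def)
          moreover have "x \<in> X'" using x False by (auto simp: X'_def)
          ultimately show ?thesis by blast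
        qed
      qed
    qed
    moreover have "H (Transposition.transpose y z ` X')"
      by (rule gen_swap[OF base cl HX' X'sub]) (use y z Suc.prems(1) Usub in auto)
    ultimately show ?case by simp
  qed
  show ?thesis using main[OF X(1)] by (simp add: c_def)
qed

lemma inj_Qst: "inj Qst"
  by (auto intro: injI)

lemma und_notS: "(x, j, S) \<notin> underlying (Delta_n n)"
  by (auto simp: underlying_def dest: D_tgt)

abbreviation RT :: "nat \<Rightarrow> (st \<times> nat \<times> st) set" where
  "RT n \<equiv> reverse_aut (underlying (Delta_n n))"

lemma rs1: "1 \<le> j \<Longrightarrow> j \<le> n \<Longrightarrow> step_set (RT n) {Fst} j = Qst ` {j..n}"
proof (rule set_eqI)
  fix q assume j: "1 \<le> j" "j \<le> n"
  show "q \<in> step_set (RT n) {Fst} j \<longleftrightarrow> q \<in> Qst ` {j..n}"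
    using j by (cases q) (auto simp: mem_step_rev und_Q und_S und_F)
qed

lemma rs2:
  assumes j: "1 \<le> j" "j \<le> n" and Y: "Y \<subseteq> {1..n}" "Y \<noteq> {}"
  shows "step_set (RT n) (Qst ` Y) j = insert S (Qst ` tau j ` Y)"
proof (rule set_eqI)
  fix q
  show "q \<in> step_set (RT n) (Qst ` Y) j \<longleftrightarrow> q \<in> insert S (Qst ` tau j ` Y)"
  proof (cases q)
    case S
    obtain y where y: "y \<in> Y" using Y by blast
    then have "1 \<le> y" "y \<le> n" using Y by auto
    then have "(S, j, Qst y) \<in> underlying (Delta_n n)" using j by (auto simp: und_S)
    then have "q \<in> step_set (RT n) (Qst ` Y) j" using S y by (auto simp: mem_step_rev)
    then show ?thesis using S by simp
  next
    case Fst then show ?thesis by (auto simp: mem_step_rev und_F)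
  next
    case (Qst k)
    show ?thesis
    proof
      assume "q \<in> step_set (RT n) (Qst ` Y) j"
      then obtain y where "y \<in> Y" "(Qst k, j, Qst y) \<in> underlying (Delta_n n)" using Qst by (auto simp: mem_step_rev)
      then have "tau j k \<in> Y" using Qst by (auto simp: und_Q)
      then have "tau j (tau j k) \<in> tau j ` Y" by blast
      then show "q \<in> insert S (Qst ` tau j ` Y)" using Qst by simp
    next
      assume "q \<in> insert S (Qst ` tau j ` Y)"
      then obtain y where y: "y \<in> Y" "k = tau j y" using Qst by auto
      then have "(Qst k, j, Qst y) \<in> underlying (Delta_n n)" using Y j tau_range[of j n y]
        by (auto simp: und_Q)
      then show "q \<in> step_set (RT n) (Qst ` Y) j" using y Qst by (auto simp: mem_step_rev)
    qed
  qed
qed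

lemma rs3:
  assumes j: "1 \<le> j" "j \<le> n" and Y: "Y \<subseteq> {1..n}" "Y \<noteq> {}"
  shows "step_set (RT n) (insert S (Qst ` Y)) j = insert S (Qst ` tau j ` Y)"
proof -
  have "step_set (RT n) (insert S (Qst ` Y)) j = step_set (RT n) (Qst ` Y) j"
    using und_notS by (auto simp: mem_step_rev)
  then show ?thesis using rs2[OF assms] by simp
qed

definition Rb :: "nat \<Rightarrow> st set set" where
  "Rb n = insert {Fst} ((\<lambda>j. Qst ` {j..n}) ` {1..n} \<union> (\<lambda>X. insert S (Qst ` X)) ` {X. X \<subseteq> {1..n} \<and> X \<noteq> {}})"

lemma Rb_cases:
  assumes "P \<in> Rb n"
  obtains "P = {Fst}" | j where "j \<in> {1..n}" "P = Qst ` {j..n}"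
    | X where "X \<subseteq> {1..n}" "X \<noteq> {}" "P = insert S (Qst ` X)"
  using assms unfolding Rb_def by blast

lemma Rb_I1: "{Fst} \<in> Rb n" unfolding Rb_def by blast
lemma Rb_I2: "j \<in> {1..n} \<Longrightarrow> Qst ` {j..n} \<in> Rb n" unfolding Rb_def by blast
lemma Rb_I3: "X \<subseteq> {1..n} \<Longrightarrow> X \<noteq> {} \<Longrightarrow> insert S (Qst ` X) \<in> Rb n" unfolding Rb_def by blast

lemma right_new: "subset_det (Sigma_n n) (RT n) {Fst} = Rb n"
proof
  show "subset_det (Sigma_n n) (RT n) {Fst} \<subseteq> Rb n"
  proof
    fix P assume "P \<in> subset_det (Sigma_n n) (RT n) {Fst}"
    then show "P \<in> Rb n"
    proof (induction rule: subset_det.induct)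
      case init then show ?case by (rule Rb_I1)
    next
      case (step P a)
      then have a: "1 \<le> a" "a \<le> n" by (auto simp: Sigma_n_def)
      have sub: "tau a ` X \<subseteq> {1..n}" "tau a ` X \<noteq> {}" if "X \<subseteq> {1..n}" "X \<noteq> {}" for X
        using tau_img_sub[OF a that(1)] that by auto
      from step.IH show ?case
      proof (cases rule: Rb_cases)
        case 1 then show ?thesis using rs1[OF a] a Rb_I2[of a n] by simp
      next
        case (2 j)
        have "{j..n} \<subseteq> {1..n}" "{j..n} \<noteq> {}" using 2 by auto
        then show ?thesis using rs2[OF a] sub 2 Rb_I3 by metis
      next
        case (3 X)
        then show ?thesis using rs3[OF a] sub Rb_I3 by metis
      qed
    qed
  qed
next
  let ?D = "subset_det (Sigma_n n) (RT n) {Fst}"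
  have i: "{Fst} \<in> ?D" by (rule subset_det.init)
  have ii: "Qst ` {j..n} \<in> ?D" if "1 \<le> j" "j \<le> n" for j
  proof -
    have "j \<in> Sigma_n n" using that by (simp add: Sigma_n_def)
    from subset_det.step[OF i this] show ?thesis using rs1[OF that] by simp
  qed
  have iii: "insert S (Qst ` X) \<in> ?D" if "X \<subseteq> {1..n}" "X \<noteq> {}" for X
  proof (rule gen[where H = "\<lambda>X. insert S (Qst ` X) \<in> ?D", OF _ _ that])
    fix j assume j: "1 \<le> j" "j \<le> n"
    have "1 \<in> Sigma_n n" using j by (simp add: Sigma_n_def)
    from subset_det.step[OF ii[OF j] this]
    have "step_set (RT n) (Qst ` {j..n}) 1 \<in> ?D" .
    moreover have "step_set (RT n) (Qst ` {j..n}) 1 = insert S (Qst ` {j..n})"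
      using rs2[of 1 n "{j..n}"] j by simp
    ultimately show "insert S (Qst ` {j..n}) \<in> ?D" by simp
  next
    fix Y l assume h: "insert S (Qst ` Y) \<in> ?D" "1 \<le> l" "l \<le> n" "Y \<subseteq> {1..n}"
    show "insert S (Qst ` tau l ` Y) \<in> ?D"
    proof (cases "Y = {}")
      case True
      then show ?thesis using h by simp
    next
      case False
      have "l \<in> Sigma_n n" using h by (simp add: Sigma_n_def)
      from subset_det.step[OF h(1) this] show ?thesis using rs3[OF h(2,3,4) False] by simp
    qed
  qed
  show "Rb n \<subseteq> ?D"
  proof
    fix P assume "P \<in> Rb n"
    then show "P \<in> ?D"
    proof (cases rule: Rb_cases)
      case 1 then show ?thesis using i by simp
    next
      case (2 j) then show ?thesis using ii by simp
    next
      case (3 X) then show ?thesis using iii by simp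
    qed
  qed
qed

lemma card_Rb:
  assumes n: "1 \<le> n"
  shows "card (Rb n) = 2 ^ n + n"
proof -
  let ?A = "(\<lambda>j. Qst ` {j..n}) ` {1..n}"
  let ?B = "(\<lambda>X. insert S (Qst ` X)) ` {X. X \<subseteq> {1..n} \<and> X \<noteq> {}}"
  have injA: "inj_on (\<lambda>j. Qst ` {j..n}) {1..n}"
  proof (rule inj_onI)
    fix x y assume xy: "x \<in> {1..n}" "y \<in> {1..n}" "Qst ` {x..n} = Qst ` {y..n}"
    then have e: "{x..n} = {y..n}" using inj_image_eq_iff[OF inj_Qst] by blast
    have "x \<in> {y..n}" "y \<in> {x..n}" using xy e by auto
    then show "x = y" by auto
  qed
  have injB: "inj_on (\<lambda>X. insert S (Qst ` X)) {X. X \<subseteq> {1..n} \<and> X \<noteq> {}}"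
  proof (rule inj_onI)
    fix x y assume "insert S (Qst ` x) = insert S (Qst ` y)"
    then have "Qst ` x = Qst ` y" by auto
    then show "x = y" using inj_image_eq_iff[OF inj_Qst] by blast
  qed
  have eqB: "{X. X \<subseteq> {1..n} \<and> X \<noteq> {}} = Pow {1..n} - {{}}" by auto
  have cB: "card ?B = 2 ^ n - 1"
    using card_image[OF injB] eqB by (simp add: card_Pow)
  have cA: "card ?A = n" using card_image[OF injA] by simp
  have disj: "?A \<inter> ?B = {}" by auto
  have fA: "finite ?A" by simp
  have fB: "finite ?B" using eqB by simp
  have "{Fst} \<notin> ?A \<union> ?B"
  proof
    assume "{Fst} \<in> ?A \<union> ?B"
    then show False
    proof
      assume "{Fst} \<in> ?A"
      then obtain j where "j \<in> {1..n}" "{Fst} = Qst ` {j..n}" by blast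
      then have "Qst n \<in> {Fst}" by auto
      then show False by simp
    next
      assume "{Fst} \<in> ?B"
      then show False by auto
    qed
  qed
  then have "card (Rb n) = Suc (card (?A \<union> ?B))" unfolding Rb_def using fA fB by simp
  also have "\<dots> = Suc (n + (2 ^ n - 1))" using card_Un_disjoint[OF fA fB disj] cA cB by simp
  also have "\<dots> = 2 ^ n + n" using one_le_power[of 2 n] by simp
  finally show ?thesis .
qed

abbreviation RD :: "nat \<Rightarrow> (st \<times> st set) set set" where
  "RD n \<equiv> subset_det (Sigma_n n) (reverse_aut (UL n)) (Tp_final n)"

abbreviation Z :: "nat \<Rightarrow> st \<times> st set" where
  "Z k \<equiv> (Qst k, {})"

lemma succN_empty[simp]: "succN n {} j = {}"
  by (simp add: succN_def)

lemma Qp_empty[simp]: "Qp {} = {}"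
  by (simp add: Qp_def)

lemma S_edge:
  assumes l: "1 \<le> l" "l \<le> n"
  shows "((S, {}), l, 0, Z 1) \<in> Tp_trans n \<and> Z 1 \<in> Tp_states n"
proof -
  have t: "((S, {}), l, 1 - 1, (Qst 1, Qst ` {1..<1})) \<in> sd_trans (Delta_n n) S"
    using TS[of 1 n l] l by simp
  then have t': "((S, {}), l, 0, Z 1) \<in> sd_trans (Delta_n n) S" by simp
  have "coacc n (Z 1)" using coacc_Q[of 1 "{}" n] sd_trans_states[OF t'] by simp
  then show ?thesis using edge[OF init_Tp t'] l by simp
qed

lemma Z_edge:
  assumes k: "1 \<le> k" "k \<le> n" and l: "1 \<le> l" "l \<le> n" and Zk: "Z k \<in> Tp_states n"
  shows "(Z k, l, outp n k l, Z (tau l k)) \<in> Tp_trans n \<and> Z (tau l k) \<in> Tp_states n"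
proof -
  have sd: "Z k \<in> sd_states (Delta_n n) S" using inS_Tp[OF Zk] .
  from TQ[OF sd _ l] have t: "(Z k, l, outp n k l, Z (tau l k)) \<in> sd_trans (Delta_n n) S" by simp
  have "coacc n (Z (tau l k))" using coacc_Q[of "tau l k" "{}" n] sd_trans_states[OF t] by simp
  then show ?thesis using edge[OF Zk t] by simp
qed

lemma Z_Tp:
  assumes k: "1 \<le> k" "k \<le> n"
  shows "Z k \<in> Tp_states n"
proof -
  have "Z 1 \<in> Tp_states n" using S_edge[of 1 n] k by simp
  from Z_edge[OF _ _ k this] k show ?thesis by (simp add: tau_def)
qed

lemma ZF_edge:
  assumes jk: "1 \<le> j" "j \<le> k" "k \<le> n"
  shows "(Z k, j, 2 * n - k + 1, (Fst, {Qst (tau j k)})) \<in> Tp_trans n \<and> (Fst, {Qst (tau j k)}) \<in> Tp_final n"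
proof -
  have Zk: "Z k \<in> Tp_states n" using Z_Tp[of k n] jk by simp
  have sd: "Z k \<in> sd_states (Delta_n n) S" using inS_Tp[OF Zk] .
  from TF[OF sd jk(1,2)] have t: "(Z k, j, 2 * n - k + 1, (Fst, {Qst (tau j k)})) \<in> sd_trans (Delta_n n) S" by simp
  have fin: "(Fst, {Qst (tau j k)}) \<in> sd_final (Delta_n n) S {Fst}"
    using sd_trans_states[OF t] by (simp add: final_iff)
  have "coacc n (Fst, {Qst (tau j k)})" using coacc_final[OF fin] .
  then show ?thesis using edge[OF Zk t] fin by (simp add: Tp_final_def)
qed

lemma fst_final: "fst ` Tp_final n \<subseteq> {Fst}"
  unfolding Tp_final_def sd_final_def by auto

lemma mem_step_RD: "x \<in> step_set (reverse_aut (UL n)) P j \<longleftrightarrow> (\<exists>y\<in>P. \<exists>v. (x, j, v, y) \<in> Tp_trans n)"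
  unfolding step_set_def reverse_aut_def underlying_def by auto

lemma fst_step_sub: "fst ` step_set (reverse_aut (UL n)) P j \<subseteq> step_set (RT n) (fst ` P) j"
proof
  fix q assume "q \<in> fst ` step_set (reverse_aut (UL n)) P j"
  then obtain x y v where x: "q = fst x" "y \<in> P" "(x, j, v, y) \<in> Tp_trans n" by (auto simp: mem_step_RD)
  then have "(x, j, v, y) \<in> sd_trans (Delta_n n) S" by (simp add: Tp_trans_iff)
  then have "(fst x, j, v, fst y) \<in> Delta_n n" by (cases x; cases y) (simp add: mem_sd_trans)
  then show "q \<in> step_set (RT n) (fst ` P) j" using x
    by (auto simp: mem_step_rev underlying_def)
qed

lemma step_mono: "A \<subseteq> B \<Longrightarrow> step_set T A j \<subseteq> step_set T B j"
  unfolding step_set_def by auto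

lemma right_base:
  assumes j: "1 \<le> j" "j \<le> n"
  shows "step_set (reverse_aut (UL n)) (Tp_final n) j \<in> RD n
    \<and> fst ` step_set (reverse_aut (UL n)) (Tp_final n) j = Qst ` {j..n}
    \<and> (\<forall>k\<in>{j..n}. Z k \<in> step_set (reverse_aut (UL n)) (Tp_final n) j)"
proof -
  let ?P = "step_set (reverse_aut (UL n)) (Tp_final n) j"
  have jS: "j \<in> Sigma_n n" using j by (simp add: Sigma_n_def)
  have m: "?P \<in> RD n" by (rule subset_det.step[OF subset_det.init jS])
  have Zs: "\<forall>k\<in>{j..n}. Z k \<in> ?P"
  proof
    fix k assume "k \<in> {j..n}"
    then have "(Z k, j, 2 * n - k + 1, (Fst, {Qst (tau j k)})) \<in> Tp_trans n" "(Fst, {Qst (tau j k)}) \<in> Tp_final n"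
      using ZF_edge[of j k n] j by auto
    then show "Z k \<in> ?P" by (auto simp: mem_step_RD)
  qed
  have "fst ` ?P \<subseteq> step_set (RT n) (fst ` Tp_final n) j" by (rule fst_step_sub)
  also have "\<dots> \<subseteq> step_set (RT n) {Fst} j" by (rule step_mono[OF fst_final])
  also have "\<dots> = Qst ` {j..n}" by (rule rs1[OF j])
  finally have "fst ` ?P \<subseteq> Qst ` {j..n}" .
  moreover have "Qst ` {j..n} \<subseteq> fst ` ?P" using Zs by force
  ultimately show ?thesis using m Zs by blast
qed

lemma right_gen:
  assumes X: "X \<subseteq> {1..n}" "X \<noteq> {}"
  shows "\<exists>P\<in>RD n. fst ` P \<subseteq> insert S (Qst ` X) \<and> (\<forall>k\<in>X. Z k \<in> P)"
proof -
  define H where "H = (\<lambda>X. X \<noteq> {} \<longrightarrow> (\<exists>P\<in>RD n. fst ` P \<subseteq> insert S (Qst ` X) \<and> (\<forall>k\<in>X. Z k \<in> P)))"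
  have "H X"
  proof (rule gen[OF _ _ X])
    fix j assume j: "1 \<le> j" "j \<le> n"
    from right_base[OF j] show "H {j..n}" unfolding H_def by blast
  next
    fix Y l
    assume h0: "H Y" and l: "1 \<le> l" "l \<le> n" and Y: "Y \<subseteq> {1..n}"
    have h: "Y \<noteq> {} \<longrightarrow> (\<exists>P\<in>RD n. fst ` P \<subseteq> insert S (Qst ` Y) \<and> (\<forall>k\<in>Y. Z k \<in> P))"
      using h0 unfolding H_def .
    show "H (tau l ` Y)" unfolding H_def
    proof
      assume ne: "tau l ` Y \<noteq> {}"
      then have Yne: "Y \<noteq> {}" by auto
      then obtain P where P: "P \<in> RD n" "fst ` P \<subseteq> insert S (Qst ` Y)" "\<forall>k\<in>Y. Z k \<in> P" using h by blast
      let ?P' = "step_set (reverse_aut (UL n)) P l"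
      have lS: "l \<in> Sigma_n n" using l by (simp add: Sigma_n_def)
      have m: "?P' \<in> RD n" by (rule subset_det.step[OF P(1) lS])
      have "fst ` ?P' \<subseteq> step_set (RT n) (fst ` P) l" by (rule fst_step_sub)
      also have "\<dots> \<subseteq> step_set (RT n) (insert S (Qst ` Y)) l" by (rule step_mono[OF P(2)])
      also have "\<dots> = insert S (Qst ` tau l ` Y)" by (rule rs3[OF l Y Yne])
      finally have sub: "fst ` ?P' \<subseteq> insert S (Qst ` tau l ` Y)" .
      have Zs: "\<forall>k\<in>tau l ` Y. Z k \<in> ?P'"
      proof
        fix k assume "k \<in> tau l ` Y"
        then obtain m where mm: "m \<in> Y" "k = tau l m" by blast
        then have k: "1 \<le> k" "k \<le> n" using tau_range[of l n m] l Y by auto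
        have "(Z k, l, outp n k l, Z (tau l k)) \<in> Tp_trans n" using Z_edge[OF k l Z_Tp[OF k]] by simp
        moreover have "Z (tau l k) \<in> P" using P(3) mm by simp
        ultimately show "Z k \<in> ?P'" by (auto simp: mem_step_RD)
      qed
      show "\<exists>P\<in>RD n. fst ` P \<subseteq> insert S (Qst ` tau l ` Y) \<and> (\<forall>k\<in>tau l ` Y. Z k \<in> P)"
        using m sub Zs by blast
    qed
  qed
  then show ?thesis using X(2) unfolding H_def by blast
qed

lemma right_S:
  assumes X: "X \<subseteq> {1..n}" "X \<noteq> {}"
  shows "\<exists>P\<in>RD n. fst ` P = insert S (Qst ` X)"
proof -
  obtain l where lX: "l \<in> X" using X by blast
  then have l: "1 \<le> l" "l \<le> n" using X by auto
  let ?Y = "tau l ` X"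
  have Y: "?Y \<subseteq> {1..n}" "?Y \<noteq> {}" using tau_img_sub[OF l X(1)] X by auto
  have one: "1 \<in> ?Y" using lX by (force simp: tau_def)
  obtain P where P: "P \<in> RD n" "fst ` P \<subseteq> insert S (Qst ` ?Y)" "\<forall>k\<in>?Y. Z k \<in> P"
    using right_gen[OF Y] by blast
  let ?P' = "step_set (reverse_aut (UL n)) P l"
  have lS: "l \<in> Sigma_n n" using l by (simp add: Sigma_n_def)
  have m: "?P' \<in> RD n" by (rule subset_det.step[OF P(1) lS])
  have "fst ` ?P' \<subseteq> step_set (RT n) (fst ` P) l" by (rule fst_step_sub)
  also have "\<dots> \<subseteq> step_set (RT n) (insert S (Qst ` ?Y)) l" by (rule step_mono[OF P(2)])
  also have "\<dots> = insert S (Qst ` tau l ` ?Y)" by (rule rs3[OF l Y])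
  also have "\<dots> = insert S (Qst ` X)" by (simp add: image_comp)
  finally have sub: "fst ` ?P' \<subseteq> insert S (Qst ` X)" .
  have Zs: "Z k \<in> ?P'" if "k \<in> X" for k
  proof -
    have k: "1 \<le> k" "k \<le> n" using that X by auto
    have "(Z k, l, outp n k l, Z (tau l k)) \<in> Tp_trans n" using Z_edge[OF k l Z_Tp[OF k]] by simp
    moreover have "Z (tau l k) \<in> P" using P(3) that by simp
    ultimately show "Z k \<in> ?P'" by (auto simp: mem_step_RD)
  qed
  have Sin: "(S, {}) \<in> ?P'"
  proof -
    have "((S, {}), l, 0, Z 1) \<in> Tp_trans n" using S_edge[OF l] by simp
    moreover have "Z 1 \<in> P" using P(3) one by blast
    ultimately show ?thesis by (auto simp: mem_step_RD)
  qed
  have "insert S (Qst ` X) \<subseteq> fst ` ?P'"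
  proof
    fix q assume "q \<in> insert S (Qst ` X)"
    then show "q \<in> fst ` ?P'"
    proof
      assume "q = S" then show ?thesis using Sin by force
    next
      assume "q \<in> Qst ` X"
      then obtain k where "k \<in> X" "q = Qst k" by blast
      then show ?thesis using Zs by force
    qed
  qed
  then show ?thesis using sub m by blast
qed

lemma right_bound:
  assumes n: "1 \<le> n"
  shows "2 ^ n + n \<le> card (RD n)"
proof -
  have sub: "Rb n \<subseteq> (\<lambda>P. fst ` P) ` RD n"
  proof
    fix B assume "B \<in> Rb n"
    then show "B \<in> (\<lambda>P. fst ` P) ` RD n"
    proof (cases rule: Rb_cases)
      case 1
      have "(Fst, {Qst (tau 1 n)}) \<in> Tp_final n"
        using ZF_edge[of 1 n n] n by blast
      then have "Fst \<in> fst ` Tp_final n" by (metis fst_conv image_eqI)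
      then have e: "fst ` Tp_final n = B" using fst_final 1 by blast
      have "Tp_final n \<in> RD n" by (rule subset_det.init)
      then show ?thesis using e by (metis image_eqI)
    next
      case (2 j)
      then have j: "1 \<le> j" "j \<le> n" by auto
      from right_base[OF j] 2(2) show ?thesis by (metis image_eqI)
    next
      case (3 X)
      from right_S[OF 3(1,2)] obtain P where "P \<in> RD n" "fst ` P = insert S (Qst ` X)" by blast
      then show ?thesis using 3(3) by (metis image_eqI)
    qed
  qed
  have c1: "card (Rb n) \<le> card ((\<lambda>P. fst ` P) ` RD n)"
    by (rule card_mono[OF _ sub]) (rule finite_imageI[OF finite_RD])
  have c2: "card ((\<lambda>P. fst ` P) ` RD n) \<le> card (RD n)" by (rule card_image_le[OF finite_RD])
  show ?thesis using c1 c2 card_Rb[OF n] by linarith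
qed

theorem theorem5:
  fixes n :: nat
  assumes "n \<ge> 1"
  shows "card (subset_det (Sigma_n n) (underlying (Tp_trans n)) (Tp_init n))
           + card (subset_det (Sigma_n n) (reverse_aut (underlying (Tp_trans n))) (Tp_final n))
           \<ge> (fact n + 2) + (2 ^ n + n)
       \<and> card (subset_det (Sigma_n n) (underlying (Delta_n n)) {S})
           + card (subset_det (Sigma_n n) (reverse_aut (underlying (Delta_n n))) {Fst})
           = 3 + (2 ^ n + n)"
proof
  have l: "fact n + 2 \<le> card (subset_det (Sigma_n n) (underlying (Tp_trans n)) (Tp_init n))"
    using left_bound[OF assms] .
  have r: "2 ^ n + n \<le> card (subset_det (Sigma_n n) (reverse_aut (underlying (Tp_trans n))) (Tp_final n))"
    using right_bound[OF assms] .
  show "card (subset_det (Sigma_n n) (underlying (Tp_trans n)) (Tp_init n))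
           + card (subset_det (Sigma_n n) (reverse_aut (underlying (Tp_trans n))) (Tp_final n))
           \<ge> (fact n + 2) + (2 ^ n + n)"
    using add_mono[OF l r] .
next
  have a: "card (subset_det (Sigma_n n) (underlying (Delta_n n)) {S}) = 3"
    using card_left_new[OF assms] .
  have b: "card (subset_det (Sigma_n n) (reverse_aut (underlying (Delta_n n))) {Fst}) = 2 ^ n + n"
    using right_new[of n] card_Rb[OF assms] by simp
  show "card (subset_det (Sigma_n n) (underlying (Delta_n n)) {S})
           + card (subset_det (Sigma_n n) (reverse_aut (underlying (Delta_n n))) {Fst})
           = 3 + (2 ^ n + n)"
    using a b by simp
qed

end
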